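(* Consider online caching with catalogue size $N$, cache capacity $C$ with $C<N/2$, batch size $B$ and horizon $T$, where the learner observes the exact request vectors (i.e. $\hat r_t=r_t$). The NFPL algorithm with $\eta=B\sqrt{T/(2C)}$ (i.e. Follow the Perturbed Leader with uniform noise on $[0,\eta]^N$) satisfies $$\bar{\mathcal{R}}_T(\mathrm{FPL})\le 2\sqrt{2}\,B\sqrt{C\,T}.$$
   Context: Online caching setting: files are indexed by $\{1,\dots,N\}$. At each time slot $t=1,\dots,T$ a batch of $B$ requests arrives, summarized by $r_t\in\mathbb{N}^N$ with $r_{t,i}$ the number of requests for file $i$ and $\sum_i r_{t,i}=B$; the sequence $r_1,\dots,r_T$ is fixed in advance (oblivious). The decision set is the capped simplex $\mathcal{X}=\{x\in[0,1]^N:\sum_{i=1}^N x_i=C\}$ and the cost of decision $x$ at slot $t$ is $\langle r_t,x\rangle$. For $s\in\mathbb{R}^N$, $M(s)\in\arg\min_{x\in\mathcal{X}}\langle s,x\rangle$. The NFPL algorithm with parameter $\eta$: at each slot $t$ draw $\gamma_t$ uniformly from $[0,\eta]^N$ (independently), play $x_t=M\big(\sum_{s<t}\hat r_s+\gamma_t\big)$, then observe $\hat r_t$. The (weak/pseudo) regret is $\bar{\mathcal{R}}_T=\mathbb{E}\big[\sum_{t=1}^T\langle r_t,x_t\rangle\big]-\min_{x\in\mathcal{X}}\sum_{t=1}^T\langle r_t,x\rangle$, expectation over all the algorithm's randomness. *)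

theory Defs
  imports "HOL-Probability.Probability"
begin

text \<open>Files are indexed by a finite type 'n, so N = CARD('n).
  Vectors in R^N are elements of real^'n.\<close>

definition capped_simplex :: "nat \<Rightarrow> (real^'n) set" where
  "capped_simplex C = {x. (\<forall>i. 0 \<le> x $ i \<and> x $ i \<le> 1) \<and> (\<Sum>i\<in>UNIV. x $ i) = real C}"

definition is_min_oracle :: "nat \<Rightarrow> (real^'n \<Rightarrow> real^'n) \<Rightarrow> bool" where
  "is_min_oracle C M \<longleftrightarrow> (\<forall>s. M s \<in> capped_simplex C \<and> (\<forall>y\<in>capped_simplex C. s \<bullet> M s \<le> s \<bullet> y))"

definition unif_box :: "real \<Rightarrow> (real^'n) measure" where
  "unif_box \<eta> = uniform_measure lebesgue (cbox 0 (\<chi> i. \<eta>))"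

text \<open>Expected cost of NFPL (with exact observations) over slots 0..T-1 (slot t here is slot t+1
  of the paper); the noise vectors gamma_0..gamma_{T-1} are i.i.d. uniform on [0,eta]^N.\<close>
definition nfpl_expected_cost ::
  "nat \<Rightarrow> (real^'n \<Rightarrow> real^'n) \<Rightarrow> real \<Rightarrow> (nat \<Rightarrow> real^'n) \<Rightarrow> real" where
  "nfpl_expected_cost T M \<eta> r =
     (\<integral>\<gamma>. (\<Sum>t<T. r t \<bullet> M ((\<Sum>s<t. r s) + \<gamma> t)) \<partial>(PiM {..<T} (\<lambda>_. unif_box \<eta>)))"

definition nfpl_regret ::
  "nat \<Rightarrow> nat \<Rightarrow> (real^'n \<Rightarrow> real^'n) \<Rightarrow> real \<Rightarrow> (nat \<Rightarrow> real^'n) \<Rightarrow> real" where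
  "nfpl_regret C T M \<eta> r =
     nfpl_expected_cost T M \<eta> r - (INF x\<in>capped_simplex C. (\<Sum>t<T. r t \<bullet> x))"

end

theory Submission
  imports Defs
begin

lemma simplex_D:
  assumes "x \<in> capped_simplex C"
  shows "\<And>i. 0 \<le> x $ i" "\<And>i. x $ i \<le> 1" "(\<Sum>i\<in>UNIV. x $ i) = real C"
  using assms by (auto simp: capped_simplex_def)

lemma exch:
  fixes x s :: "real^'n"
  assumes x: "x \<in> capped_simplex C" and opt: "\<forall>y\<in>capped_simplex C. s \<bullet> x \<le> s \<bullet> y"
    and lt: "s $ i < s $ k"
  shows "x $ i = 1 \<or> x $ k = 0"
proof (rule ccontr)
  assume "\<not> (x $ i = 1 \<or> x $ k = 0)"
  with simplex_D[OF x] have xi: "x $ i < 1" and xk: "x $ k > 0"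
    by (metis order_le_less)+
  have ik: "i \<noteq> k" using lt by auto
  define e where "e = min (1 - x $ i) (x $ k)"
  have e: "e > 0" "e \<le> 1 - x $ i" "e \<le> x $ k" using xi xk by (auto simp: e_def)
  define y where "y = x + e *\<^sub>R (axis i 1 - axis k 1)"
  have yc: "y $ j = x $ j + (if j = i then e else 0) - (if j = k then e else 0)" for j
    by (simp add: y_def axis_def)
  have "y \<in> capped_simplex C"
  proof -
    have "0 \<le> y $ j \<and> y $ j \<le> 1" for j
      using simplex_D(1,2)[OF x, of j] e ik by (auto simp: yc)
    moreover have "(\<Sum>j\<in>UNIV. y $ j) = real C"
      using simplex_D(3)[OF x] by (simp add: yc sum.distrib sum_subtractf)
    ultimately show ?thesis by (auto simp: capped_simplex_def)
  qed
  moreover have "s \<bullet> y = s \<bullet> x + e * (s $ i - s $ k)"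
    by (simp add: y_def inner_add_right inner_diff_right inner_axis algebra_simps)
  moreover have "e * (s $ i - s $ k) < 0" using e lt by (simp add: mult_pos_neg)
  ultimately show False using opt by fastforce
qed

definition rnk :: "real^'n \<Rightarrow> 'n \<Rightarrow> real" where
  "rnk s i = (\<Sum>j\<in>UNIV. if s $ j < s $ i then 1 else 0)"

lemma rnk_card: "rnk s i = real (card {j. s $ j < s $ i})"
  unfolding rnk_def by (simp add: sum.If_cases)

lemma argmin_struct:
  fixes x s :: "real^'n"
  assumes x: "x \<in> capped_simplex C" and opt: "\<forall>y\<in>capped_simplex C. s \<bullet> x \<le> s \<bullet> y"
    and dist: "\<And>i j. i \<noteq> j \<Longrightarrow> s $ i \<noteq> s $ j"
  shows "x $ i = (if rnk s i < real C then 1 else 0)"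
proof (cases "rnk s i < real C")
  case True
  show ?thesis
  proof (rule ccontr)
    assume "x $ i \<noteq> (if rnk s i < real C then 1 else 0)"
    with True simplex_D(2)[OF x, of i] have xi: "x $ i < 1" by simp
    have "x $ j \<le> (if s $ j < s $ i then 1 else 0) + (if j = i then x $ i else 0)" for j
    proof (cases "s $ j < s $ i")
      case True then show ?thesis using simplex_D(2)[OF x, of j] by auto
    next
      case False
      show ?thesis
      proof (cases "j = i")
        case False
        with \<open>\<not> s $ j < s $ i\<close> dist[OF False] have "s $ i < s $ j" by auto
        from exch[OF x opt this] xi have "x $ j = 0" by auto
        then show ?thesis using \<open>\<not> s $ j < s $ i\<close> False by simp
      qed simp
    qed
    then have "(\<Sum>j\<in>UNIV. x $ j) \<le> (\<Sum>j\<in>UNIV. (if s $ j < s $ i then 1 else 0) + (if j = i then x $ i else 0))"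
      by (intro sum_mono)
    also have "\<dots> = rnk s i + x $ i" by (simp add: rnk_def sum.distrib)
    finally have "(\<Sum>j\<in>UNIV. x $ j) \<le> rnk s i + x $ i" .
    moreover have "rnk s i + 1 \<le> real C"
      using True unfolding rnk_card by (metis Suc_leI of_nat_Suc of_nat_le_iff of_nat_less_iff add.commute)
    ultimately show False using simplex_D(3)[OF x] True xi by linarith
  qed
next
  case False
  show ?thesis
  proof (rule ccontr)
    assume "x $ i \<noteq> (if rnk s i < real C then 1 else 0)"
    with False simplex_D(1)[OF x, of i] have xi: "x $ i > 0" by simp
    have "(if s $ j < s $ i then 1 else 0) + (if j = i then x $ i else 0) \<le> x $ j" for j
    proof (cases "s $ j < s $ i")
      case True
      from exch[OF x opt True] xi have "x $ j = 1" by auto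
      then show ?thesis using True by auto
    next
      case False then show ?thesis using simplex_D(1)[OF x, of j] by auto
    qed
    then have "(\<Sum>j\<in>UNIV. (if s $ j < s $ i then 1 else 0) + (if j = i then x $ i else 0)) \<le> (\<Sum>j\<in>UNIV. x $ j)"
      by (intro sum_mono)
    moreover have "(\<Sum>j\<in>UNIV. (if s $ j < s $ i then 1 else 0) + (if j = i then x $ i else 0)) = rnk s i + x $ i" by (simp add: rnk_def sum.distrib)
    ultimately show False using simplex_D(3)[OF x] False xi by linarith
  qed
qed

lemma rnk_meas: "(\<lambda>s. rnk s i) \<in> borel_measurable borel"
  unfolding rnk_def by measurable

definition gfun :: "nat \<Rightarrow> real^'n \<Rightarrow> real^'n \<Rightarrow> real" where
  "gfun C a s = (\<Sum>i\<in>UNIV. a $ i * (if rnk s i < real C then 1 else 0))"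

lemma gfun_meas: "gfun C a \<in> borel_measurable borel"
  unfolding gfun_def using rnk_meas by measurable

lemma oracle_eq_gfun:
  assumes "is_min_oracle C M" and dist: "\<And>i j. i \<noteq> j \<Longrightarrow> s $ i \<noteq> s $ j"
  shows "a \<bullet> M s = gfun C a s"
  using assms argmin_struct[of "M s" C s] unfolding is_min_oracle_def gfun_def
  by (simp add: inner_vec_def)

lemma meas_ae_lebesgue:
  fixes f g :: "'a::euclidean_space \<Rightarrow> real"
  assumes g: "g \<in> borel_measurable lebesgue" and ae: "AE x in lebesgue. f x = g x"
  shows "f \<in> borel_measurable lebesgue"
proof (rule measurableI)
  fix A :: "real set" assume A: "A \<in> sets borel"
  have 1: "g -` A \<inter> space lebesgue \<in> sets lebesgue" using g A by (rule measurable_sets)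
  have 2: "AE x in lebesgue. x \<in> g -` A \<inter> space lebesgue \<longleftrightarrow> x \<in> f -` A \<inter> space lebesgue"
    using ae by eventually_elim auto
  show "f -` A \<inter> space lebesgue \<in> sets lebesgue"
    by (rule completion.in_sets_AE[OF 2 1]) simp
qed simp

lemma distinct_ae:
  fixes c :: "real^'n"
  shows "AE \<gamma> in lebesgue. \<forall>i j. i \<noteq> j \<longrightarrow> (c + \<gamma>) $ i \<noteq> (c + \<gamma>) $ j"
proof -
  define N where "N = (\<Union>p\<in>{p. fst p \<noteq> snd p}. {\<gamma>::real^'n. (axis (fst p) 1 - axis (snd p) 1) \<bullet> \<gamma> = c $ snd p - c $ fst p})"
  have "negligible N"
    unfolding N_def
  proof (intro negligible_Union)
    show "finite ((\<lambda>p. {\<gamma>::real^'n. (axis (fst p) 1 - axis (snd p) 1) \<bullet> \<gamma> = c $ snd p - c $ fst p}) ` {p. fst p \<noteq> snd p})"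
      by simp
  next
    fix T assume "T \<in> (\<lambda>p. {\<gamma>::real^'n. (axis (fst p) 1 - axis (snd p) 1) \<bullet> \<gamma> = c $ snd p - c $ fst p}) ` {p. fst p \<noteq> snd p}"
    then obtain i j where ij: "i \<noteq> j" and T: "T = {\<gamma>::real^'n. (axis i 1 - axis j 1) \<bullet> \<gamma> = c $ j - c $ i}"
      by auto
    have "axis i (1::real) - axis j 1 \<noteq> 0"
    proof
      assume "axis i (1::real) - axis j 1 = 0"
      then have "(axis i (1::real) - axis j 1) $ i = 0" by simp
      with ij show False by (simp add: axis_def)
    qed
    then show "negligible T" unfolding T by (intro negligible_hyperplane) simp
  qed
  then have "N \<in> null_sets lebesgue" by (simp add: negligible_iff_null_sets)
  then have "AE \<gamma> in lebesgue. \<gamma> \<notin> N" by (rule AE_not_in)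
  then show ?thesis
  proof eventually_elim
    case (elim \<gamma>)
    show ?case
    proof (intro allI impI)
      fix i j :: 'n assume ij: "i \<noteq> j"
      have "(axis i 1 - axis j 1) \<bullet> \<gamma> = \<gamma> \<bullet> (axis i 1 - axis j 1)"
        by (rule inner_commute)
      also have "\<dots> = \<gamma> $ i - \<gamma> $ j"
        by (simp add: inner_diff_right inner_axis)
      finally have "(axis i 1 - axis j 1) \<bullet> \<gamma> = \<gamma> $ i - \<gamma> $ j" .
      then have "\<gamma> $ i - \<gamma> $ j \<noteq> c $ j - c $ i"
        using elim ij unfolding N_def by (metis (mono_tags, lifting) UN_iff fst_conv mem_Collect_eq snd_conv)
      then show "(c + \<gamma>) $ i \<noteq> (c + \<gamma>) $ j" by auto
    qed
  qed
qed

lemma oracle_meas: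
  assumes "is_min_oracle C M"
  shows "(\<lambda>\<gamma>. a \<bullet> M (c + \<gamma>)) \<in> borel_measurable lebesgue"
proof (rule meas_ae_lebesgue)
  show "(\<lambda>\<gamma>. gfun C a (c + \<gamma>)) \<in> borel_measurable lebesgue"
  proof (intro measurable_completion measurable_compose[OF _ gfun_meas])
    show "(\<lambda>\<gamma>. c + \<gamma>) \<in> lborel \<rightarrow>\<^sub>M borel" by simp
  qed
  show "AE \<gamma> in lebesgue. a \<bullet> M (c + \<gamma>) = gfun C a (c + \<gamma>)"
    using distinct_ae[of c] by eventually_elim (rule oracle_eq_gfun[OF assms], auto)
qed

definition box\<eta> :: "real \<Rightarrow> (real^'n) set" where
  "box\<eta> \<eta> = cbox 0 (\<chi> i. \<eta>)"

lemma measure_box: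
  assumes "\<eta> > 0"
  shows "measure lebesgue (box\<eta> \<eta> :: (real^'n) set) = \<eta> ^ CARD('n)"
proof -
  have ne: "cbox 0 (\<chi> i. \<eta>) \<noteq> ({} :: (real^'n) set)"
    using assms by (auto simp: interval_eq_empty_cart)
  have "measure lebesgue (box\<eta> \<eta> :: (real^'n) set) = Henstock_Kurzweil_Integration.content (cbox 0 (\<chi> i. \<eta>) :: (real^'n) set)"
    unfolding box\<eta>_def by (simp add: measure_completion)
  also have "\<dots> = \<eta> ^ CARD('n)" using content_cbox_cart[OF ne] by simp
  finally show ?thesis .
qed

lemma emeasure_box:
  assumes "\<eta> > 0"
  shows "emeasure lebesgue (box\<eta> \<eta> :: (real^'n) set) = ennreal (\<eta> ^ CARD('n))"
proof -
  have "box\<eta> \<eta> \<in> lmeasurable" by (simp add: box\<eta>_def)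
  then have "emeasure lebesgue (box\<eta> \<eta> :: (real^'n) set) = ennreal (measure lebesgue (box\<eta> \<eta> :: (real^'n) set))"
    by (rule emeasure_eq_measure2)
  then show ?thesis using measure_box[OF assms, where 'n='n] by simp
qed

lemma unif_box_eq: "unif_box \<eta> = uniform_measure lebesgue (box\<eta> \<eta>)"
  by (simp add: unif_box_def box\<eta>_def)

lemma prob_unif:
  assumes "\<eta> > 0"
  shows "prob_space (unif_box \<eta> :: (real^'n) measure)"
  unfolding unif_box_eq using emeasure_box[OF assms, where 'n='n] assms
  by (intro prob_space_uniform_measure) auto

lemma E_eq:
  fixes h :: "real^'n \<Rightarrow> real"
  assumes "\<eta> > 0" and h: "h \<in> borel_measurable lebesgue"
  shows "(\<integral>x. h x \<partial>unif_box \<eta>) = (\<integral>x. indicator (box\<eta> \<eta>) x * h x \<partial>lebesgue) / \<eta> ^ CARD('n)"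
proof -
  have bs: "box\<eta> \<eta> \<in> sets lebesgue" by (simp add: box\<eta>_def)
  have V: "\<eta> ^ CARD('n) > 0" using assms by simp
  have "(unif_box \<eta> :: (real^'n) measure) = density lebesgue (\<lambda>x. ennreal (indicator (box\<eta> \<eta>) x / \<eta> ^ CARD('n)))"
  proof -
    have "(\<lambda>x::real^'n. indicator (box\<eta> \<eta>) x / emeasure lebesgue (box\<eta> \<eta> :: (real^'n) set)) = (\<lambda>x. ennreal (indicator (box\<eta> \<eta>) x / \<eta> ^ CARD('n)))"
      unfolding emeasure_box[OF assms(1), where 'n='n]
    proof (rule ext)
      fix x :: "real^'n"
      have "(1::ennreal) / ennreal (\<eta> ^ CARD('n)) = ennreal (1 / \<eta> ^ CARD('n))"
        using divide_ennreal[of 1 "\<eta> ^ CARD('n)"] V by simp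
      then show "indicator (box\<eta> \<eta>) x / ennreal (\<eta> ^ CARD('n)) = ennreal (indicator (box\<eta> \<eta>) x / \<eta> ^ CARD('n))"
        by (simp split: split_indicator)
    qed
    then show ?thesis unfolding unif_box_eq uniform_measure_def by (rule arg_cong)
  qed
  then have "(\<integral>x. h x \<partial>unif_box \<eta>) = (\<integral>x. (indicator (box\<eta> \<eta>) x / \<eta> ^ CARD('n)) *\<^sub>R h x \<partial>lebesgue)"
  proof -
    have "integral\<^sup>L (density lebesgue (\<lambda>x. ennreal (indicator (box\<eta> \<eta>) x / \<eta> ^ CARD('n)))) h
       = (\<integral>x. (indicator (box\<eta> \<eta>) x / \<eta> ^ CARD('n)) *\<^sub>R h x \<partial>lebesgue)"
      by (rule integral_density[OF h]) (use bs V in \<open>auto intro!: borel_measurable_divide borel_measurable_indicator\<close>)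
    then show ?thesis using \<open>unif_box \<eta> = _\<close> by simp
  qed
  also have "\<dots> = (\<integral>x. indicator (box\<eta> \<eta>) x * h x / \<eta> ^ CARD('n) \<partial>lebesgue)"
    by simp
  also have "\<dots> = (\<integral>x. indicator (box\<eta> \<eta>) x * h x \<partial>lebesgue) / \<eta> ^ CARD('n)"
    by (rule integral_divide_zero)
  finally show ?thesis .
qed

lemma lebesgue_translate:
  fixes F :: "real^'n \<Rightarrow> real" and r :: "real^'n"
  assumes F: "F \<in> borel_measurable lebesgue"
  shows "(\<integral>x. F (r + x) \<partial>lebesgue) = (\<integral>x. F x \<partial>lebesgue)"
proof -
  have T: "(\<lambda>x. r + (\<Sum>j\<in>Basis. (1 * (x \<bullet> j)) *\<^sub>R j)) = (\<lambda>x::real^'n. r + x)"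
    by (simp add: euclidean_representation)
  have eq: "lebesgue = distr lebesgue lebesgue (\<lambda>x::real^'n. r + x)"
    using lebesgue_affine_euclidean[of "\<lambda>_. 1" r] unfolding T by (simp add: density_1)
  have m: "(\<lambda>x::real^'n. r + x) \<in> lebesgue \<rightarrow>\<^sub>M lebesgue"
    using lebesgue_affine_measurable[of "\<lambda>_. 1" r] unfolding T by simp
  have "integral\<^sup>L (distr lebesgue lebesgue (\<lambda>x::real^'n. r + x)) F = (\<integral>x. F (r + x) \<partial>lebesgue)"
    by (rule integral_distr[OF m F])
  then show ?thesis using eq by simp
qed

lemma measure_cbox0:
  fixes v :: "real^'n"
  assumes "\<And>j. 0 \<le> v $ j"
  shows "measure lebesgue (cbox 0 v) = (\<Prod>j\<in>UNIV. v $ j)"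
proof -
  have ne: "cbox 0 v \<noteq> {}" using assms by (auto simp: interval_eq_empty_cart not_less)
  have "measure lebesgue (cbox 0 v) = Henstock_Kurzweil_Integration.content (cbox 0 v)"
    by (simp add: measure_completion)
  also have "\<dots> = (\<Prod>j\<in>UNIV. v $ j)" using content_cbox_cart[OF ne] by simp
  finally show ?thesis .
qed

lemma integrable_ind_bounded:
  fixes f :: "'a::euclidean_space \<Rightarrow> real"
  assumes S: "S \<in> lmeasurable" and f: "f \<in> borel_measurable lebesgue" and b: "\<And>x. \<bar>f x\<bar> \<le> b"
  shows "integrable lebesgue (\<lambda>x. indicator S x * f x)"
proof (rule Bochner_Integration.integrable_bound[where f="\<lambda>x. b * indicator S x"])
  show "integrable lebesgue (\<lambda>x. b * indicator S x)"
    using S by (intro integrable_mult_right integrable_real_indicator) (auto simp: fmeasurable_def)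
  show "(\<lambda>x. indicator S x * f x) \<in> borel_measurable lebesgue"
    using S f by (intro borel_measurable_times borel_measurable_indicator) (auto simp: fmeasurable_def)
  show "AE x in lebesgue. norm (indicator S x * f x) \<le> norm (b * indicator S x)"
    using b by (intro AE_I2) (auto simp: indicator_def abs_of_nonneg[OF order_trans[OF abs_ge_zero b]])
qed

lemma transl_meas: "(\<lambda>x::'a::euclidean_space. r + x) \<in> lebesgue \<rightarrow>\<^sub>M lebesgue"
proof -
  have T: "(\<lambda>x. r + (\<Sum>j\<in>Basis. (1 * (x \<bullet> j)) *\<^sub>R j)) = (\<lambda>x::'a. r + x)"
    by (simp add: euclidean_representation)
  show ?thesis using lebesgue_affine_measurable[of "\<lambda>_. 1" r] unfolding T by simp
qed

lemma stab:
  fixes h :: "real^'n \<Rightarrow> real" and r :: "real^'n"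
  assumes eta: "\<eta> > 0" and h: "h \<in> borel_measurable lebesgue"
    and h0: "\<And>x. 0 \<le> h x" and hb: "\<And>x. h x \<le> b" and r0: "\<And>i. 0 \<le> r $ i"
  shows "(\<integral>x. h x \<partial>unif_box \<eta>) - (\<integral>x. h (r + x) \<partial>unif_box \<eta>) \<le> b * (\<Sum>i\<in>UNIV. r $ i) / \<eta>"
proof -
  let ?B = "box\<eta> \<eta> :: (real^'n) set"
  let ?V = "\<eta> ^ CARD('n)"
  define T where "T = (\<lambda>x. r + x) ` ?B"
  define D where "D i = ?B \<inter> {x. x $ i < r $ i}" for i
  have V: "?V > 0" using eta by simp
  have b0: "0 \<le> b" using h0 hb order_trans by blast
  have habs: "\<bar>h x\<bar> \<le> b" for x using h0 hb by (simp add: abs_of_nonneg)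
  have Bm: "?B \<in> lmeasurable" by (simp add: box\<eta>_def)
  have Tm: "T \<in> lmeasurable" unfolding T_def using measurable_translation[OF Bm, of r] by simp
  have hr: "(\<lambda>x. h (r + x)) \<in> borel_measurable lebesgue"
    using measurable_compose[OF transl_meas h] .
  have hrabs: "\<bar>h (r + x)\<bar> \<le> b" for x by (rule habs)
  have Dsets: "D i \<in> sets lebesgue" for i
  proof -
    have "{x::real^'n. x $ i < r $ i} \<in> sets borel"
      by (intro borel_open open_Collect_less continuous_intros)
    then have "{x::real^'n. x $ i < r $ i} \<in> sets lebesgue" by simp
    then show ?thesis unfolding D_def using Bm by (auto simp: fmeasurable_def)
  qed
  define Bi where "Bi i = cbox (0::real^'n) (\<chi> j. if j = i then r $ i else \<eta>)" for i
  have DB: "D i \<subseteq> Bi i" for i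
    unfolding D_def Bi_def box\<eta>_def by (auto simp: mem_box_cart)
  have Bim: "Bi i \<in> lmeasurable" for i unfolding Bi_def by simp
  have measD: "measure lebesgue (D i) * \<eta> \<le> r $ i * ?V" for i
  proof -
    have "measure lebesgue (D i) \<le> measure lebesgue (Bi i)"
      by (rule measure_mono_fmeasurable[OF DB Dsets Bim])
    also have "\<dots> = (\<Prod>j\<in>UNIV. if j = i then r $ i else \<eta>)"
      unfolding Bi_def using r0 eta by (subst measure_cbox0) (auto simp: less_imp_le)
    finally have "measure lebesgue (D i) * \<eta> \<le> (\<Prod>j\<in>UNIV. if j = i then r $ i else \<eta>) * \<eta>"
      using eta by (simp add: mult_right_mono)
    also have "(\<Prod>j\<in>UNIV. if j = i then r $ i else \<eta>) * \<eta> = r $ i * ?V"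
    proof -
      have "(\<Prod>j\<in>UNIV. if j = i then r $ i else \<eta>) = r $ i * (\<Prod>j\<in>UNIV - {i}. if j = i then r $ i else \<eta>)"
        by (subst prod.remove[of UNIV i]) auto
      also have "(\<Prod>j\<in>UNIV - {i}. if j = i then r $ i else \<eta>) = (\<Prod>j\<in>UNIV - {i}. \<eta>)"
        by (intro prod.cong) auto
      finally have 1: "(\<Prod>j\<in>UNIV. if j = i then r $ i else \<eta>) = r $ i * (\<Prod>j\<in>UNIV - {i}. \<eta>)" .
      have 2: "(\<Prod>j::'n\<in>UNIV. \<eta>) = \<eta> * (\<Prod>j\<in>UNIV - {i}. \<eta>)"
        by (rule prod.remove) simp_all
      show ?thesis using 1 2 by simp
    qed
    finally show ?thesis .
  qed
  have E1: "(\<integral>x. h x \<partial>unif_box \<eta>) = (\<integral>x. indicator ?B x * h x \<partial>lebesgue) / ?V"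
    by (rule E_eq[OF eta h])
  have E2: "(\<integral>x. h (r + x) \<partial>unif_box \<eta>) = (\<integral>x. indicator ?B x * h (r + x) \<partial>lebesgue) / ?V"
    by (rule E_eq[OF eta hr])
  have Fm: "(\<lambda>y. indicator T y * h y) \<in> borel_measurable lebesgue"
    using Tm h by (intro borel_measurable_times borel_measurable_indicator) (auto simp: fmeasurable_def)
  have I2: "(\<integral>x. indicator ?B x * h (r + x) \<partial>lebesgue) = (\<integral>x. indicator T x * h x \<partial>lebesgue)"
  proof -
    have "indicator T (r + x) = (indicator ?B x :: real)" for x
      unfolding T_def by (auto simp: indicator_def)
    then have "(\<integral>x. indicator ?B x * h (r + x) \<partial>lebesgue) = (\<integral>x. indicator T (r + x) * h (r + x) \<partial>lebesgue)"
      by simp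
    also have "\<dots> = (\<integral>x. indicator T x * h x \<partial>lebesgue)"
      by (rule lebesgue_translate[OF Fm])
    finally show ?thesis .
  qed
  have pw: "indicator ?B x * h x \<le> indicator T x * h x + b * (\<Sum>i\<in>UNIV. indicator (D i) x)" for x
  proof (cases "x \<in> ?B")
    case False
    then show ?thesis using h0[of x] b0
      by (simp add: indicator_def sum_nonneg)
  next
    case xB: True
    show ?thesis
    proof (cases "x \<in> T")
      case True
      then show ?thesis using xB b0 by (simp add: sum_nonneg)
    next
      case False
      have "x - r \<notin> ?B"
      proof
        assume "x - r \<in> ?B"
        then have "r + (x - r) \<in> T" unfolding T_def by blast
        with False show False by simp
      qed
      then obtain i where "\<not> (0 \<le> (x - r) $ i \<and> (x - r) $ i \<le> \<eta>)"
        unfolding box\<eta>_def mem_box_cart by auto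
      moreover have "x $ i \<le> \<eta>" using xB unfolding box\<eta>_def mem_box_cart by auto
      then have "(x - r) $ i \<le> \<eta>" using r0[of i] by simp
      ultimately have "x $ i < r $ i" by auto
      then have "x \<in> D i" using xB unfolding D_def by auto
      then have "1 \<le> (\<Sum>i\<in>UNIV. indicator (D i) x :: real)"
        using member_le_sum[of i UNIV "\<lambda>i. indicator (D i) x :: real"] by (auto simp: indicator_def)
      then have "b \<le> b * (\<Sum>i\<in>UNIV. indicator (D i) x)" using b0
        by (metis mult.right_neutral mult_left_mono)
      then show ?thesis using xB False hb[of x] by simp
    qed
  qed
  have Dfm: "D i \<in> lmeasurable" for i by (rule fmeasurableI2[OF Bim DB Dsets])
  have intD: "integrable lebesgue (indicator (D i) :: real^'n \<Rightarrow> real)" for i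
    using Dfm[of i] unfolding fmeasurable_def by (intro integrable_real_indicator) auto
  have intS: "integrable lebesgue (\<lambda>x. \<Sum>i\<in>UNIV. indicator (D i) x :: real)"
    using Bochner_Integration.integrable_sum[where I=UNIV and M=lebesgue and f="\<lambda>i x. indicator (D i) x :: real"] intD by simp
  have intT: "integrable lebesgue (\<lambda>x. indicator T x * h x)"
    by (rule integrable_ind_bounded[OF Tm h habs])
  have "(\<integral>x. indicator ?B x * h x \<partial>lebesgue) \<le> (\<integral>x. indicator T x * h x + b * (\<Sum>i\<in>UNIV. indicator (D i) x) \<partial>lebesgue)"
  proof (rule integral_mono')
    show "integrable lebesgue (\<lambda>x. indicator T x * h x + b * (\<Sum>i\<in>UNIV. indicator (D i) x))"
      using intT intS by (intro Bochner_Integration.integrable_add Bochner_Integration.integrable_mult_right)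
    show "indicator ?B x * h x \<le> indicator T x * h x + b * (\<Sum>i\<in>UNIV. indicator (D i) x)" for x
      by (rule pw)
    show "0 \<le> indicator T x * h x + b * (\<Sum>i\<in>UNIV. indicator (D i) x)" for x
      using h0[of x] b0 by (intro add_nonneg_nonneg mult_nonneg_nonneg sum_nonneg) auto
  qed
  also have "\<dots> = (\<integral>x. indicator T x * h x \<partial>lebesgue) + b * (\<integral>x. (\<Sum>i\<in>UNIV. indicator (D i) x) \<partial>lebesgue)"
    using intT intS by (simp add: Bochner_Integration.integral_add)
  also have "(\<integral>x. (\<Sum>i\<in>UNIV. indicator (D i) x :: real) \<partial>lebesgue) = (\<Sum>i\<in>UNIV. (\<integral>x. indicator (D i) x \<partial>lebesgue))"
    using Bochner_Integration.integral_sum[where I=UNIV and M=lebesgue and f="\<lambda>i x. indicator (D i) x :: real"] intD by simp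
  also have "(\<Sum>i\<in>UNIV. (\<integral>x. (indicator (D i) x :: real) \<partial>lebesgue)) = (\<Sum>i\<in>UNIV. measure lebesgue (D i))"
    by simp
  finally have main: "(\<integral>x. indicator ?B x * h x \<partial>lebesgue) - (\<integral>x. indicator ?B x * h (r + x) \<partial>lebesgue)
      \<le> b * (\<Sum>i\<in>UNIV. measure lebesgue (D i))" using I2 by simp
  have "b * (\<Sum>i\<in>UNIV. measure lebesgue (D i)) * \<eta> \<le> b * (\<Sum>i\<in>UNIV. r $ i) * ?V"
  proof -
    have "(\<Sum>i\<in>UNIV. measure lebesgue (D i)) * \<eta> \<le> (\<Sum>i\<in>UNIV. r $ i) * ?V"
      using measD by (simp add: sum_distrib_right sum_mono)
    then show ?thesis using b0 by (metis mult.assoc mult_left_mono)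
  qed
  then have "b * (\<Sum>i\<in>UNIV. measure lebesgue (D i)) / ?V \<le> b * (\<Sum>i\<in>UNIV. r $ i) / \<eta>"
    using V eta by (simp add: field_simps)
  moreover have "(\<integral>x. h x \<partial>unif_box \<eta>) - (\<integral>x. h (r + x) \<partial>unif_box \<eta>)
     = ((\<integral>x. indicator ?B x * h x \<partial>lebesgue) - (\<integral>x. indicator ?B x * h (r + x) \<partial>lebesgue)) / ?V"
    unfolding E1 E2 by (simp add: diff_divide_distrib)
  moreover have "((\<integral>x. indicator ?B x * h x \<partial>lebesgue) - (\<integral>x. indicator ?B x * h (r + x) \<partial>lebesgue)) / ?V
     \<le> b * (\<Sum>i\<in>UNIV. measure lebesgue (D i)) / ?V"
    using main V by (intro divide_right_mono) auto
  ultimately show ?thesis by linarith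
qed

lemma arith_final:
  fixes B C T :: real
  assumes "B \<ge> 1" "C \<ge> 1" "T \<ge> 1"
  shows "B * sqrt (T / (2 * C)) * C + T * B * B / (B * sqrt (T / (2 * C))) \<le> 2 * sqrt 2 * B * sqrt (C * T)"
proof -
  define q where "q = sqrt (T / (2 * C))"
  define s where "s = sqrt (C * T)"
  have q: "q > 0" using assms by (simp add: q_def)
  have q2: "q ^ 2 = T / (2 * C)" using assms by (simp add: q_def)
  have ct: "0 \<le> C * T" using assms by (intro mult_nonneg_nonneg) auto
  have s2: "s ^ 2 = C * T" unfolding s_def using ct by (rule real_sqrt_pow2)
  have s0: "s \<ge> 0" unfolding s_def by (rule real_sqrt_ge_zero[OF ct])
  have "(sqrt 2 * s * q) ^ 2 = 2 * (s ^ 2) * (q ^ 2)" by (simp add: power_mult_distrib)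
  also have "\<dots> = T ^ 2" unfolding s2 q2 using assms by (simp add: field_simps power2_eq_square)
  finally have "(sqrt 2 * s * q) ^ 2 = T ^ 2" .
  then have sq: "sqrt 2 * s * q = T" using q s0 assms
    by (metis mult_nonneg_nonneg order_less_imp_le power2_eq_iff_nonneg real_sqrt_ge_zero zero_le_numeral zero_le_one order_trans)
  have "B * q * C + T * B * B / (B * q) = B * q * C + T * B / q"
    using assms by simp
  also have "\<dots> = (B * C * q ^ 2 + T * B) / q" using q by (simp add: field_simps power2_eq_square)
  also have "B * C * q ^ 2 = B * T / 2" using q2 assms by (simp add: field_simps)
  also have "(B * T / 2 + T * B) / q \<le> 2 * B * T / q"
    using q assms by (intro divide_right_mono) auto
  also have "2 * B * T / q = 2 * sqrt 2 * B * s"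
    using q sq by (simp add: field_simps)
  finally show ?thesis unfolding q_def s_def .
qed

lemma btl:
  fixes r :: "nat \<Rightarrow> real^'n" and \<gamma> :: "real^'n"
  assumes M: "is_min_oracle C M"
  shows "\<gamma> \<bullet> M ((\<Sum>s<0. r s) + \<gamma>) + (\<Sum>t<n. r t \<bullet> M ((\<Sum>s<Suc t. r s) + \<gamma>))
         \<le> ((\<Sum>s<n. r s) + \<gamma>) \<bullet> M ((\<Sum>s<n. r s) + \<gamma>)"
proof (induction n)
  case 0 then show ?case by simp
next
  case (Suc n)
  let ?L = "(\<Sum>s<n. r s) + \<gamma>" and ?L' = "(\<Sum>s<Suc n. r s) + \<gamma>"
  have opt: "?L \<bullet> M ?L \<le> ?L \<bullet> M ?L'"
    using M unfolding is_min_oracle_def by blast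
  have "\<gamma> \<bullet> M ((\<Sum>s<0. r s) + \<gamma>) + (\<Sum>t<Suc n. r t \<bullet> M ((\<Sum>s<Suc t. r s) + \<gamma>))
     = (\<gamma> \<bullet> M ((\<Sum>s<0. r s) + \<gamma>) + (\<Sum>t<n. r t \<bullet> M ((\<Sum>s<Suc t. r s) + \<gamma>))) + r n \<bullet> M ?L'"
    by simp
  also have "\<dots> \<le> ?L \<bullet> M ?L + r n \<bullet> M ?L'" using Suc by simp
  also have "\<dots> \<le> ?L \<bullet> M ?L' + r n \<bullet> M ?L'" using opt by simp
  also have "\<dots> = ?L' \<bullet> M ?L'" by (simp add: inner_add_left algebra_simps)
  finally show ?case .
qed

lemma btl2:
  fixes r :: "nat \<Rightarrow> real^'n" and \<gamma> :: "real^'n"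
  assumes M: "is_min_oracle C M" and g: "\<And>i. 0 \<le> \<gamma> $ i" "\<And>i. \<gamma> $ i \<le> \<eta>"
    and x: "x \<in> capped_simplex C"
  shows "(\<Sum>t<n. r t \<bullet> M ((\<Sum>s<Suc t. r s) + \<gamma>)) \<le> (\<Sum>s<n. r s) \<bullet> x + \<eta> * real C"
proof -
  have Min: "M ((\<Sum>s<0. r s) + \<gamma>) \<in> capped_simplex C" using M unfolding is_min_oracle_def by blast
  have "0 \<le> \<gamma> \<bullet> M ((\<Sum>s<0. r s) + \<gamma>)"
    unfolding inner_vec_def using g simplex_D(1)[OF Min] by (intro sum_nonneg) auto
  moreover have "((\<Sum>s<n. r s) + \<gamma>) \<bullet> M ((\<Sum>s<n. r s) + \<gamma>) \<le> ((\<Sum>s<n. r s) + \<gamma>) \<bullet> x"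
    using M x unfolding is_min_oracle_def by blast
  moreover have "\<gamma> \<bullet> x \<le> \<eta> * real C"
  proof -
    have "\<gamma> \<bullet> x = (\<Sum>i\<in>UNIV. \<gamma> $ i * x $ i)" by (simp add: inner_vec_def)
    also have "\<dots> \<le> (\<Sum>i\<in>UNIV. \<eta> * x $ i)"
      using g simplex_D(1)[OF x] by (intro sum_mono mult_right_mono) auto
    also have "\<dots> = \<eta> * (\<Sum>i\<in>UNIV. x $ i)" by (simp add: sum_distrib_left)
    also have "\<dots> = \<eta> * real C" using simplex_D(3)[OF x] by simp
    finally show ?thesis .
  qed
  ultimately show ?thesis using btl[OF M, where \<gamma>=\<gamma> and n=n and r=r] by (simp add: inner_add_left)
qed

lemma inner_bounds:
  fixes a :: "real^'n"
  assumes M: "is_min_oracle C M" and a: "\<And>i. 0 \<le> a $ i"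
  shows "0 \<le> a \<bullet> M s" "a \<bullet> M s \<le> (\<Sum>i\<in>UNIV. a $ i)"
proof -
  have Ms: "M s \<in> capped_simplex C" using M unfolding is_min_oracle_def by blast
  show "0 \<le> a \<bullet> M s" unfolding inner_vec_def using a simplex_D(1)[OF Ms] by (intro sum_nonneg) auto
  show "a \<bullet> M s \<le> (\<Sum>i\<in>UNIV. a $ i)" unfolding inner_vec_def
    using a simplex_D(2)[OF Ms] by (intro sum_mono) (simp add: mult_left_le)
qed

theorem corollary1:
  fixes C B T :: nat
    and r :: "nat \<Rightarrow> real^'n"
    and M :: "real^'n \<Rightarrow> real^'n"
  assumes "1 \<le> C" and "real C < real CARD('n) / 2"
    and "1 \<le> B" and "1 \<le> T"
    and "\<And>t i. r t $ i \<in> \<nat>"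
    and "\<And>t. (\<Sum>i\<in>UNIV. r t $ i) = real B"
    and "is_min_oracle C M"
  shows "nfpl_regret C T M (real B * sqrt (real T / (2 * real C))) r
           \<le> 2 * sqrt 2 * real B * sqrt (real C * real T)"
proof -
  note M = assms(7)
  define \<eta> where "\<eta> = real B * sqrt (real T / (2 * real C))"
  have eta: "\<eta> > 0" using assms by (simp add: \<eta>_def)
  define R where "R t = (\<Sum>s<t. r s)" for t
  define U where "U = (unif_box \<eta> :: (real^'n) measure)"
  define P where "P = PiM {..<T} (\<lambda>_. U)"
  interpret U: prob_space U unfolding U_def by (rule prob_unif[OF eta])
  have probP: "prob_space P" unfolding P_def by (rule prob_space_PiM) (rule U.prob_space_axioms)
  interpret P: prob_space P by (rule probP)
  have sU: "sets U = sets lebesgue" by (simp add: U_def unif_box_def)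
  have r0: "0 \<le> r t $ i" for t i using assms(5)[of t i] by (auto elim: Nats_cases)
  define f where "f t v = r t \<bullet> M (R t + v)" for t v
  have fm: "f t \<in> borel_measurable U" for t
    unfolding f_def measurable_cong_sets[OF sU refl] by (rule oracle_meas[OF M])
  have fb: "0 \<le> f t v" "f t v \<le> real B" for t v
    unfolding f_def using inner_bounds[OF M, of "r t" "R t + v"] r0 assms(6)[of t] by auto
  have fint: "integrable U (f t)" for t
    by (rule U.integrable_const_bound[where B="real B"]) (use fb fm in \<open>auto\<close>)
  have comp: "(\<integral>\<gamma>. f t (\<gamma> t) \<partial>P) = (\<integral>v. f t v \<partial>U)" if t: "t < T" for t
  proof -
    have proj: "(\<lambda>\<gamma>. \<gamma> t) \<in> P \<rightarrow>\<^sub>M U" unfolding P_def using t by simp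
    have "distr P U (\<lambda>\<gamma>. \<gamma> t) = U"
      unfolding P_def using t U.prob_space_axioms by (intro distr_PiM_component) auto
    then have "(\<integral>v. f t v \<partial>U) = (\<integral>v. f t v \<partial>distr P U (\<lambda>\<gamma>. \<gamma> t))" by simp
    also have "\<dots> = (\<integral>\<gamma>. f t (\<gamma> t) \<partial>P)" by (rule integral_distr[OF proj fm])
    finally show ?thesis by simp
  qed
  have Pint: "integrable P (\<lambda>\<gamma>. f t (\<gamma> t))" if t: "t < T" for t
  proof (rule P.integrable_const_bound[where B="real B"])
    have proj: "(\<lambda>\<gamma>. \<gamma> t) \<in> P \<rightarrow>\<^sub>M U" unfolding P_def using t by simp
    show "(\<lambda>\<gamma>. f t (\<gamma> t)) \<in> borel_measurable P" using measurable_compose[OF proj fm] .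
    show "AE x in P. norm (f t (x t)) \<le> real B" using fb by auto
  qed
  have cost: "nfpl_expected_cost T M \<eta> r = (\<Sum>t<T. (\<integral>v. f t v \<partial>U))"
  proof -
    have "nfpl_expected_cost T M \<eta> r = (\<integral>\<gamma>. (\<Sum>t<T. f t (\<gamma> t)) \<partial>P)"
      unfolding nfpl_expected_cost_def P_def U_def f_def R_def by simp
    also have "\<dots> = (\<Sum>t<T. (\<integral>\<gamma>. f t (\<gamma> t) \<partial>P))"
      by (rule Bochner_Integration.integral_sum) (use Pint in auto)
    also have "\<dots> = (\<Sum>t<T. (\<integral>v. f t v \<partial>U))"
      by (rule sum.cong) (auto simp: comp)
    finally show ?thesis .
  qed
  define g where "g t v = r t \<bullet> M (R (Suc t) + v)" for t v
  have gm: "g t \<in> borel_measurable U" for t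
    unfolding g_def measurable_cong_sets[OF sU refl] by (rule oracle_meas[OF M])
  have gb: "0 \<le> g t v" "g t v \<le> real B" for t v
    unfolding g_def using inner_bounds[OF M, of "r t" "R (Suc t) + v"] r0 assms(6)[of t] by auto
  have gint: "integrable U (g t)" for t
    by (rule U.integrable_const_bound[where B="real B"]) (use gb gm in \<open>auto\<close>)
  have fg: "f t (r t + v) = g t v" for t v
    unfolding f_def g_def R_def sum.lessThan_Suc by (simp only: add.assoc)
  have st: "(\<integral>v. f t v \<partial>U) \<le> (\<integral>v. g t v \<partial>U) + real B * real B / \<eta>" for t
  proof -
    have fml: "f t \<in> borel_measurable lebesgue"
      unfolding f_def by (rule oracle_meas[OF M])
    have "(\<integral>v. f t v \<partial>U) - (\<integral>v. f t (r t + v) \<partial>U) \<le> real B * (\<Sum>i\<in>UNIV. r t $ i) / \<eta>"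
      unfolding U_def by (rule stab[OF eta fml]) (use fb r0 in auto)
    then show ?thesis unfolding fg assms(6) by simp
  qed
  \<comment> \<open>step 3: be the leader\<close>
  have S_ne: "capped_simplex C \<noteq> ({} :: (real^'n) set)"
    using M unfolding is_min_oracle_def by blast
  have key: "nfpl_expected_cost T M \<eta> r - (\<eta> * real C + real T * real B * real B / \<eta>) \<le> (\<Sum>t<T. r t \<bullet> x)"
    if x: "x \<in> capped_simplex C" for x
  proof -
    have "nfpl_expected_cost T M \<eta> r \<le> (\<Sum>t<T. (\<integral>v. g t v \<partial>U) + real B * real B / \<eta>)"
      unfolding cost by (rule sum_mono) (rule st)
    also have "\<dots> = (\<integral>v. (\<Sum>t<T. g t v) \<partial>U) + real T * real B * real B / \<eta>"
      using gint by (simp add: sum.distrib Bochner_Integration.integral_sum)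
    also have "(\<integral>v. (\<Sum>t<T. g t v) \<partial>U) \<le> (\<integral>v. R T \<bullet> x + \<eta> * real C \<partial>U)"
    proof (rule integral_mono_AE)
      show "integrable U (\<lambda>v. \<Sum>t<T. g t v)" using gint by auto
      show "integrable U (\<lambda>v. R T \<bullet> x + \<eta> * real C)" by simp
      have bs: "box\<eta> \<eta> \<in> sets lebesgue" by (simp add: box\<eta>_def)
      show "AE v in U. (\<Sum>t<T. g t v) \<le> R T \<bullet> x + \<eta> * real C"
        unfolding U_def unif_box_eq
      proof (rule AE_uniform_measureI[OF bs], rule AE_I2, rule impI)
        fix v :: "real^'n" assume "v \<in> box\<eta> \<eta>"
        then have v: "\<And>i. 0 \<le> v $ i" "\<And>i. v $ i \<le> \<eta>" unfolding box\<eta>_def mem_box_cart by auto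
        show "(\<Sum>t<T. g t v) \<le> R T \<bullet> x + \<eta> * real C"
          using btl2[OF M v x, where n=T and r=r] unfolding g_def R_def by simp
      qed
    qed
    also have "(\<integral>v. R T \<bullet> x + \<eta> * real C \<partial>U) = R T \<bullet> x + \<eta> * real C" by (simp add: U.prob_space)
    also have "R T \<bullet> x = (\<Sum>t<T. r t \<bullet> x)" unfolding R_def by (simp add: inner_sum_left)
    finally show ?thesis by simp
  qed
  have "nfpl_expected_cost T M \<eta> r - (\<eta> * real C + real T * real B * real B / \<eta>)
      \<le> (INF x\<in>capped_simplex C. (\<Sum>t<T. r t \<bullet> x))"
    by (rule cINF_greatest[OF S_ne key])
  then have "nfpl_regret C T M \<eta> r \<le> \<eta> * real C + real T * real B * real B / \<eta>"
    unfolding nfpl_regret_def by simp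
  also have "\<dots> \<le> 2 * sqrt 2 * real B * sqrt (real C * real T)"
    unfolding \<eta>_def using arith_final[of "real B" "real C" "real T"] assms by simp
  finally show ?thesis unfolding \<eta>_def .
qed

end
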